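(* CBS-DL is complete and optimal: on every MAPF-DL instance, and for every choice of tie-breaking, of collisions selected for branching, and of paths returned by the low-level search, CBS-DL terminates and returns a solution whose number of unsuccessful agents is the minimum over all solutions of the instance.
   Context: MAPF-DL. An instance consists of a deadline $T_{\mathrm{end}}\in\mathbb{N}$, a finite undirected graph $G=(V,E)$, and $M$ agents $a_1,\dots,a_M$; agent $a_i$ has a start vertex $s_i$ and a goal vertex $g_i$, and the graph distance from $s_i$ to $g_i$ is at most $T_{\mathrm{end}}$. A path for $a_i$ is a map $l_i:\{0,\dots,T_{\mathrm{end}}\}\to V$ with $l_i(0)=s_i$, $l_i(T_{\mathrm{end}})=g_i$, and for each $t\ge1$ either $(l_i(t-1),l_i(t))\in E$ or $l_i(t-1)=l_i(t)$. A plan assigns a path to each agent of some subset (the successful agents); the others are unsuccessful and get no path. Two distinct successful agents $a_i,a_j$ have a vertex collision $(a_i,a_j,v,t)$ if $l_i(t)=l_j(t)=v$, and an edge collision $(a_i,a_j,u,v,t)$ if $u=l_i(t)=l_j(t+1)$ and $v=l_j(t)=l_i(t+1)$. A solution is a plan with no collisions; its cost is the number of unsuccessful agents. Constraints: a vertex constraint $(a_i,v,t)$ forbids $l_i(t)=v$; an edge constraint $(a_i,u,v,t)$ forbids $l_i(t)=u$ together with $l_i(t+1)=v$. A path for $a_i$ obeys a constraint set $C$ if it violates none of the constraints in $C$ concerning $a_i$. Algorithm CBS-DL. Low-level search: given agent $a_i$ and constraint set $C$, it returns some path for $a_i$ obeying $C$ if one exists, and otherwise returns "no path". The high level performs best-first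 search over a constraint tree (CT); each CT node $N$ has a constraint set $N.C$, a plan $N.\mathrm{plan}$, and cost $N.\mathrm{cost}$ = number of agents without a path in $N.\mathrm{plan}$. The root has $C=\emptyset$ and the plan containing a low-level path for every agent (cost $0$). OPEN initially contains the root. Repeat: remove from OPEN a node $N$ of minimum cost (ties arbitrary). If $N.\mathrm{plan}$ has no collision, return it. Otherwise pick some collision in $N.\mathrm{plan}$. For a vertex collision $(a_i,a_j,v,t)$ create two children: one with constraints $N.C\cup\{(a_i,v,t)\}$ and one with $N.C\cup\{(a_j,v,t)\}$; for an edge collision $(a_i,a_j,u,v,t)$ the children get $N.C\cup\{(a_i,u,v,t)\}$ and $N.C\cup\{(a_j,v,u,t)\}$, respectively. Each child copies $N.\mathrm{plan}$, and then the path of the agent named in its new constraint is replaced by the low-level search result for that agent under the child's constraint set (the agent's path is deleted if "no path" is returned); the child's cost is recomputed and the child is inserted into OPEN. *)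

theory Defs
  imports "HOL-Library.Multiset"
begin

text \<open>An instance: deadline, finite undirected graph (V,E) with E a symmetric
  relation on V, number of agents M (agents are indexed 0..M-1), start and goal maps.\<close>

record 'v mapf_inst =
  Tend :: nat
  Vs   :: "'v set"
  Es   :: "('v \<times> 'v) set"
  nag  :: nat
  st   :: "nat \<Rightarrow> 'v"
  gl   :: "nat \<Rightarrow> 'v"

definition dist_le :: "'v mapf_inst \<Rightarrow> 'v \<Rightarrow> 'v \<Rightarrow> nat \<Rightarrow> bool" where
  "dist_le I u v n \<longleftrightarrow> (\<exists>xs. xs \<noteq> [] \<and> hd xs = u \<and> last xs = v \<and> length xs \<le> Suc n \<and>
      set xs \<subseteq> Vs I \<and> (\<forall>k. Suc k < length xs \<longrightarrow> (xs ! k, xs ! Suc k) \<in> Es I))"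

definition valid_inst :: "'v mapf_inst \<Rightarrow> bool" where
  "valid_inst I \<longleftrightarrow> finite (Vs I) \<and> Es I \<subseteq> Vs I \<times> Vs I \<and> sym (Es I) \<and>
     (\<forall>i < nag I. st I i \<in> Vs I \<and> gl I i \<in> Vs I \<and> dist_le I (st I i) (gl I i) (Tend I))"

text \<open>A path is a map from times to vertices; only the values at times 0..T_end matter.\<close>
type_synonym 'v path = "nat \<Rightarrow> 'v"
type_synonym 'v plan = "nat \<Rightarrow> 'v path option"

definition is_path :: "'v mapf_inst \<Rightarrow> nat \<Rightarrow> 'v path \<Rightarrow> bool" where
  "is_path I i l \<longleftrightarrow> l 0 = st I i \<and> l (Tend I) = gl I i \<and>
     (\<forall>t \<le> Tend I. l t \<in> Vs I) \<and>
     (\<forall>t. 1 \<le> t \<and> t \<le> Tend I \<longrightarrow> (l (t - 1), l t) \<in> Es I \<or> l (t - 1) = l t)"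

text \<open>A plan assigns paths to a subset of the agents (None = unsuccessful).\<close>
definition is_plan :: "'v mapf_inst \<Rightarrow> 'v plan \<Rightarrow> bool" where
  "is_plan I P \<longleftrightarrow> (\<forall>i < nag I. \<forall>l. P i = Some l \<longrightarrow> is_path I i l) \<and>
                   (\<forall>i \<ge> nag I. P i = None)"

definition plan_cost :: "'v mapf_inst \<Rightarrow> 'v plan \<Rightarrow> nat" where
  "plan_cost I P = card {i. i < nag I \<and> P i = None}"

datatype 'v collision =
    VColl nat nat 'v nat
  | EColl nat nat 'v 'v nat

fun is_collision :: "'v mapf_inst \<Rightarrow> 'v plan \<Rightarrow> 'v collision \<Rightarrow> bool" where
  "is_collision I P (VColl i j v t) \<longleftrightarrow>
     i < nag I \<and> j < nag I \<and> i \<noteq> j \<and> t \<le> Tend I \<and>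
     (\<exists>li lj. P i = Some li \<and> P j = Some lj \<and> li t = v \<and> lj t = v)"
| "is_collision I P (EColl i j u v t) \<longleftrightarrow>
     i < nag I \<and> j < nag I \<and> i \<noteq> j \<and> t < Tend I \<and>
     (\<exists>li lj. P i = Some li \<and> P j = Some lj \<and>
        u = li t \<and> u = lj (Suc t) \<and> v = lj t \<and> v = li (Suc t))"

definition collision_free :: "'v mapf_inst \<Rightarrow> 'v plan \<Rightarrow> bool" where
  "collision_free I P \<longleftrightarrow> (\<forall>c. \<not> is_collision I P c)"

definition is_solution :: "'v mapf_inst \<Rightarrow> 'v plan \<Rightarrow> bool" where
  "is_solution I P \<longleftrightarrow> is_plan I P \<and> collision_free I P"

datatype 'v constr =
    VCon nat 'v nat
  | ECon nat 'v 'v nat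

fun violates :: "nat \<Rightarrow> 'v path \<Rightarrow> 'v constr \<Rightarrow> bool" where
  "violates i l (VCon k v t) \<longleftrightarrow> k = i \<and> l t = v"
| "violates i l (ECon k u v t) \<longleftrightarrow> k = i \<and> l t = u \<and> l (Suc t) = v"

definition obeys :: "nat \<Rightarrow> 'v path \<Rightarrow> 'v constr set \<Rightarrow> bool" where
  "obeys i l C \<longleftrightarrow> (\<forall>c \<in> C. \<not> violates i l c)"

fun constr_agent :: "'v constr \<Rightarrow> nat" where
  "constr_agent (VCon k _ _) = k"
| "constr_agent (ECon k _ _ _) = k"

text \<open>Possible results of the low-level search for agent i under C (any obeying path;
  "no path" (None) exactly when no obeying path exists).\<close>
definition low_level_result :: "'v mapf_inst \<Rightarrow> nat \<Rightarrow> 'v constr set \<Rightarrow> 'v path option \<Rightarrow> bool" where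
  "low_level_result I i C r \<longleftrightarrow>
     (case r of Some l \<Rightarrow> is_path I i l \<and> obeys i l C
              | None \<Rightarrow> \<not> (\<exists>l. is_path I i l \<and> obeys i l C))"

type_synonym 'v ct_node = "'v constr set \<times> 'v plan"

definition node_cost :: "'v mapf_inst \<Rightarrow> 'v ct_node \<Rightarrow> nat" where
  "node_cost I N = plan_cost I (snd N)"

definition root_node :: "'v mapf_inst \<Rightarrow> 'v ct_node \<Rightarrow> bool" where
  "root_node I N \<longleftrightarrow> fst N = {} \<and>
     (\<forall>i < nag I. \<exists>l. snd N i = Some l \<and> low_level_result I i {} (Some l)) \<and>
     (\<forall>i \<ge> nag I. snd N i = None)"

definition child_node :: "'v mapf_inst \<Rightarrow> 'v ct_node \<Rightarrow> 'v constr \<Rightarrow> 'v ct_node \<Rightarrow> bool" where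
  "child_node I N c N' \<longleftrightarrow>
     (\<exists>r. low_level_result I (constr_agent c) (insert c (fst N)) r \<and>
          N' = (insert c (fst N), (snd N)(constr_agent c := r)))"

fun branch_constrs :: "'v collision \<Rightarrow> 'v constr \<times> 'v constr" where
  "branch_constrs (VColl i j v t) = (VCon i v t, VCon j v t)"
| "branch_constrs (EColl i j u v t) = (ECon i u v t, ECon j v u t)"

datatype 'v cbs_state = Search "'v ct_node multiset" | Return "'v plan"

text \<open>One iteration of the main loop; all choices (tie-breaking among minimum-cost
  nodes, the collision, the low-level paths) are nondeterministic.\<close>
inductive cbs_step :: "'v mapf_inst \<Rightarrow> 'v cbs_state \<Rightarrow> 'v cbs_state \<Rightarrow> bool" for I where
  ret: "\<lbrakk> N \<in># OPEN; \<forall>N' \<in># OPEN. node_cost I N \<le> node_cost I N';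
          collision_free I (snd N) \<rbrakk>
        \<Longrightarrow> cbs_step I (Search OPEN) (Return (snd N))"
| expand: "\<lbrakk> N \<in># OPEN; \<forall>N' \<in># OPEN. node_cost I N \<le> node_cost I N';
          is_collision I (snd N) coll; branch_constrs coll = (c1, c2);
          child_node I N c1 N1; child_node I N c2 N2 \<rbrakk>
        \<Longrightarrow> cbs_step I (Search OPEN) (Search (OPEN - {#N#} + {#N1, N2#}))"

end

theory Submission
  imports Defs
begin

definition cu :: "'v mapf_inst \<Rightarrow> 'v constr set" where
  "cu I = {c. case c of VCon k v t \<Rightarrow> k < nag I \<and> v \<in> Vs I \<and> t \<le> Tend I
             | ECon k u v t \<Rightarrow> k < nag I \<and> u \<in> Vs I \<and> v \<in> Vs I \<and> t \<le> Tend I}"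

lemma finite_cu: assumes "finite (Vs I)" shows "finite (cu I)"
proof -
  have "cu I \<subseteq> (\<lambda>(k,v,t). VCon k v t) ` ({..<nag I} \<times> Vs I \<times> {..Tend I}) \<union>
     (\<lambda>(k,u,v,t). ECon k u v t) ` ({..<nag I} \<times> Vs I \<times> Vs I \<times> {..Tend I})"
  proof
    fix c assume "c \<in> cu I" then show "c \<in> (\<lambda>(k,v,t). VCon k v t) ` ({..<nag I} \<times> Vs I \<times> {..Tend I}) \<union>
     (\<lambda>(k,u,v,t). ECon k u v t) ` ({..<nag I} \<times> Vs I \<times> Vs I \<times> {..Tend I})"
      by (cases c) (force simp: cu_def)+
  qed
  moreover have "finite ((\<lambda>(k,v,t). VCon k v t) ` ({..<nag I} \<times> Vs I \<times> {..Tend I}) \<union>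
     (\<lambda>(k,u,v,t). ECon k u v t) ` ({..<nag I} \<times> Vs I \<times> Vs I \<times> {..Tend I}))"
    using assms by auto
  ultimately show ?thesis by (rule finite_subset)
qed

definition node_ok :: "'v mapf_inst \<Rightarrow> 'v ct_node \<Rightarrow> bool" where
  "node_ok I N \<longleftrightarrow> fst N \<subseteq> cu I \<and>
    (\<forall>i<nag I. case snd N i of Some l \<Rightarrow> is_path I i l \<and> obeys i l (fst N)
                  | None \<Rightarrow> \<not> (\<exists>l. is_path I i l \<and> obeys i l (fst N))) \<and>
    (\<forall>i\<ge>nag I. snd N i = None)"

definition resp :: "'v plan \<Rightarrow> 'v constr set \<Rightarrow> bool" where
  "resp Q C \<longleftrightarrow> (\<forall>i l. Q i = Some l \<longrightarrow> obeys i l C)"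

definition inv :: "'v mapf_inst \<Rightarrow> 'v cbs_state \<Rightarrow> bool" where
  "inv I S = (case S of Search OPEN \<Rightarrow> OPEN \<noteq> {#} \<and> (\<forall>N\<in>#OPEN. node_ok I N) \<and>
        (\<forall>Q. is_solution I Q \<longrightarrow> (\<exists>N\<in>#OPEN. resp Q (fst N)))
     | Return P \<Rightarrow> is_solution I P \<and> (\<forall>Q. is_solution I Q \<longrightarrow> plan_cost I P \<le> plan_cost I Q))"

lemma violates_other: "constr_agent c \<noteq> i \<Longrightarrow> \<not> violates i l c"
  by (cases c) auto

lemma obeys_insert_other: "constr_agent c \<noteq> i \<Longrightarrow> obeys i l (insert c C) = obeys i l C"
  using violates_other by (auto simp: obeys_def)

lemma child_ok:
  assumes "node_ok I N" "c \<in> cu I" "child_node I N c N'"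
  shows "node_ok I N'"
proof -
  obtain r where r: "low_level_result I (constr_agent c) (insert c (fst N)) r"
    and N': "N' = (insert c (fst N), (snd N)(constr_agent c := r))"
    using assms(3) unfolding child_node_def by blast
  have a: "constr_agent c < nag I" using assms(2) by (cases c) (auto simp: cu_def)
  show ?thesis unfolding node_ok_def N'
  proof (intro conjI allI impI)
    show "fst (insert c (fst N), (snd N)(constr_agent c := r)) \<subseteq> cu I"
      using assms(1,2) by (auto simp: node_ok_def)
  next
    fix i assume i: "i < nag I"
    show "case snd (insert c (fst N), (snd N)(constr_agent c := r)) i of
         None \<Rightarrow> \<not> (\<exists>l. is_path I i l \<and> obeys i l (fst (insert c (fst N), (snd N)(constr_agent c := r))))
         | Some l \<Rightarrow> is_path I i l \<and> obeys i l (fst (insert c (fst N), (snd N)(constr_agent c := r)))"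
    proof (cases "i = constr_agent c")
      case True then show ?thesis using r by (auto simp: low_level_result_def split: option.splits)
    next
      case False then show ?thesis using assms(1) i
        by (auto simp: node_ok_def obeys_insert_other split: option.splits)
    qed
  next
    fix i assume "nag I \<le> i"
    then show "snd (insert c (fst N), (snd N)(constr_agent c := r)) i = None"
      using a assms(1) by (auto simp: node_ok_def)
  qed
qed

lemma ok_some: "node_ok I N \<Longrightarrow> i < nag I \<Longrightarrow> snd N i = Some l \<Longrightarrow> is_path I i l \<and> obeys i l (fst N)"
proof -
  assume a: "node_ok I N" "i < nag I" "snd N i = Some l"
  then have "case snd N i of Some l \<Rightarrow> is_path I i l \<and> obeys i l (fst N)
                  | None \<Rightarrow> \<not> (\<exists>l. is_path I i l \<and> obeys i l (fst N))" unfolding node_ok_def by blast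
  then show ?thesis using a(3) by simp
qed

lemma ok_none: "node_ok I N \<Longrightarrow> i < nag I \<Longrightarrow> snd N i = None \<Longrightarrow> \<not> (\<exists>l. is_path I i l \<and> obeys i l (fst N))"
proof -
  assume a: "node_ok I N" "i < nag I" "snd N i = None"
  then have "case snd N i of Some l \<Rightarrow> is_path I i l \<and> obeys i l (fst N)
                  | None \<Rightarrow> \<not> (\<exists>l. is_path I i l \<and> obeys i l (fst N))" unfolding node_ok_def by blast
  then show ?thesis using a(3) by simp
qed

lemma branch:
  assumes ok: "node_ok I N" and coll: "is_collision I (snd N) coll"
    and bc: "branch_constrs coll = (c1, c2)"
  shows "c1 \<in> cu I - fst N \<and> c2 \<in> cu I - fst N \<and>
     (\<forall>Q. is_solution I Q \<longrightarrow> resp Q (fst N) \<longrightarrow> resp Q (insert c1 (fst N)) \<or> resp Q (insert c2 (fst N)))"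
proof (cases coll)
  case (VColl i j v t)
  with coll obtain li lj where ij: "i < nag I" "j < nag I" "i \<noteq> j" "t \<le> Tend I"
    and li: "snd N i = Some li" and lj: "snd N j = Some lj" and v: "li t = v" "lj t = v" by auto
  have c: "c1 = VCon i v t" "c2 = VCon j v t" using bc VColl by auto
  have pi: "is_path I i li \<and> obeys i li (fst N)" using ok_some[OF ok _ li] ij by blast
  have pj: "is_path I j lj \<and> obeys j lj (fst N)" using ok_some[OF ok _ lj] ij by blast
  have "c1 \<in> cu I - fst N" using pi ij v c by (auto simp: cu_def is_path_def obeys_def)
  moreover have "c2 \<in> cu I - fst N" using pj ij v c by (auto simp: cu_def is_path_def obeys_def)
  moreover have "resp Q (insert c1 (fst N)) \<or> resp Q (insert c2 (fst N))"
    if Q: "is_solution I Q" "resp Q (fst N)" for Q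
  proof (rule ccontr)
    assume "\<not> ?thesis"
    then obtain k1 l1 k2 l2 where "Q k1 = Some l1" "violates k1 l1 c1" "Q k2 = Some l2" "violates k2 l2 c2"
      using Q(2) by (auto simp: resp_def obeys_def)
    then have "is_collision I Q (VColl i j v t)" using ij c by auto
    moreover have "\<not> is_collision I Q (VColl i j v t)" using Q(1) unfolding is_solution_def collision_free_def by blast
    ultimately show False by blast
  qed
  ultimately show ?thesis by blast
next
  case (EColl i j u v t)
  with coll obtain li lj where ij: "i < nag I" "j < nag I" "i \<noteq> j" "t < Tend I"
    and li: "snd N i = Some li" and lj: "snd N j = Some lj"
    and v: "u = li t" "u = lj (Suc t)" "v = lj t" "v = li (Suc t)" by auto
  have c: "c1 = ECon i u v t" "c2 = ECon j v u t" using bc EColl by auto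
  have pi: "is_path I i li \<and> obeys i li (fst N)" using ok_some[OF ok _ li] ij by blast
  have pj: "is_path I j lj \<and> obeys j lj (fst N)" using ok_some[OF ok _ lj] ij by blast
  have vs: "li t \<in> Vs I" "lj t \<in> Vs I" using pi pj ij(4) by (auto simp: is_path_def)
  have "c1 \<in> cu I - fst N" using pi vs ij v c by (auto simp: cu_def is_path_def obeys_def)
  moreover have "c2 \<in> cu I - fst N" using pj vs ij v c by (auto simp: cu_def is_path_def obeys_def)
  moreover have "resp Q (insert c1 (fst N)) \<or> resp Q (insert c2 (fst N))"
    if Q: "is_solution I Q" "resp Q (fst N)" for Q
  proof (rule ccontr)
    assume "\<not> ?thesis"
    then obtain k1 l1 k2 l2 where "Q k1 = Some l1" "violates k1 l1 c1" "Q k2 = Some l2" "violates k2 l2 c2"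
      using Q(2) by (auto simp: resp_def obeys_def)
    then have "is_collision I Q (EColl i j u v t)" using ij c by auto
    moreover have "\<not> is_collision I Q (EColl i j u v t)" using Q(1) unfolding is_solution_def collision_free_def by blast
    ultimately show False by blast
  qed
  ultimately show ?thesis by blast
qed


lemma cost_le:
  assumes ok: "node_ok I N" and Q: "is_plan I Q" and r: "resp Q (fst N)"
  shows "node_cost I N \<le> plan_cost I Q"
proof -
  have "{i. i < nag I \<and> snd N i = None} \<subseteq> {i. i < nag I \<and> Q i = None}"
  proof (safe)
    fix i assume i: "i < nag I" "snd N i = None"
    show "Q i = None"
    proof (rule ccontr)
      assume "Q i \<noteq> None" then obtain l where l: "Q i = Some l" by auto
      then have "is_path I i l" using Q i by (auto simp: is_plan_def)
      moreover have "obeys i l (fst N)" using r l by (auto simp: resp_def)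
      ultimately show False using ok_none[OF ok i] by blast
    qed
  qed
  then show ?thesis unfolding node_cost_def plan_cost_def by (intro card_mono) auto
qed

lemma step_inv:
  assumes st: "cbs_step I S S'" and iv: "inv I S"
  shows "inv I S'"
  using st
proof cases
  case (ret N OPEN)
  have ok: "\<forall>N\<in>#OPEN. node_ok I N" and ex: "\<forall>Q. is_solution I Q \<longrightarrow> (\<exists>N\<in>#OPEN. resp Q (fst N))"
    using iv ret by (auto simp: inv_def)
  have okN: "node_ok I N" using ok ret by auto
  have plan: "is_plan I (snd N)" using okN
    unfolding is_plan_def
  proof (intro conjI allI impI)
    fix i l assume "i < nag I" "snd N i = Some l"
    then show "is_path I i l" using ok_some[OF okN] by blast
  next
    fix i assume "nag I \<le> i" then show "snd N i = None" using okN by (auto simp: node_ok_def)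
  qed
  have "plan_cost I (snd N) \<le> plan_cost I Q" if Q: "is_solution I Q" for Q
  proof -
    obtain N' where N': "N' \<in># OPEN" "resp Q (fst N')" using ex Q by blast
    have "node_cost I N' \<le> plan_cost I Q" using cost_le[OF _ _ N'(2)] N'(1) ok Q
      by (auto simp: is_solution_def)
    moreover have "node_cost I N \<le> node_cost I N'" using ret N'(1) by auto
    ultimately show ?thesis by (simp add: node_cost_def)
  qed
  then show ?thesis using ret plan by (auto simp: inv_def is_solution_def)
next
  case (expand N OPEN coll c1 c2 N1 N2)
  have ok: "\<forall>N\<in>#OPEN. node_ok I N" and ex: "\<forall>Q. is_solution I Q \<longrightarrow> (\<exists>N\<in>#OPEN. resp Q (fst N))"
    using iv expand by (auto simp: inv_def)
  have okN: "node_ok I N" using ok expand by auto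
  note b = branch[OF okN expand(5,6)]
  have ok1: "node_ok I N1" using child_ok[OF okN _ expand(7)] b by blast
  have ok2: "node_ok I N2" using child_ok[OF okN _ expand(8)] b by blast
  have f1: "fst N1 = insert c1 (fst N)" using expand(7) by (auto simp: child_node_def)
  have f2: "fst N2 = insert c2 (fst N)" using expand(8) by (auto simp: child_node_def)
  have "\<exists>M\<in>#OPEN - {#N#} + {#N1, N2#}. resp Q (fst M)" if Q: "is_solution I Q" for Q
  proof -
    obtain N' where N': "N' \<in># OPEN" "resp Q (fst N')" using ex Q by blast
    show ?thesis
    proof (cases "N' = N")
      case True
      then have "resp Q (fst N1) \<or> resp Q (fst N2)" using b Q N'(2) f1 f2 by auto
      then show ?thesis by auto
    next
      case False
      then have "N' \<in># OPEN - {#N#}" using N'(1) by (simp add: in_diff_count)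
      then show ?thesis using N'(2) by auto
    qed
  qed
  moreover have "\<forall>M\<in>#OPEN - {#N#} + {#N1, N2#}. node_ok I M"
    using ok ok1 ok2 by (auto dest: in_diffD)
  ultimately show ?thesis using expand by (simp add: inv_def)
qed

definition mu :: "'v mapf_inst \<Rightarrow> 'v ct_node \<Rightarrow> nat" where
  "mu I N = card (cu I) - card (fst N)"

lemma step_dec:
  assumes fin: "finite (cu I)" and st: "cbs_step I (Search OPx) (Search OPx')" and iv: "inv I (Search OPx)"
  shows "(image_mset (mu I) OPx', image_mset (mu I) OPx) \<in> mult1 less_than"
  using st
proof cases
  case (expand N coll c1 c2 N1 N2)
  have ok: "\<forall>N\<in>#OPx. node_ok I N" using iv by (auto simp: inv_def)
  have okN: "node_ok I N" using ok expand by auto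
  note b = branch[OF okN expand(4,5)]
  have f1: "fst N1 = insert c1 (fst N)" using expand(6) by (auto simp: child_node_def)
  have f2: "fst N2 = insert c2 (fst N)" using expand(7) by (auto simp: child_node_def)
  have sub: "fst N \<subseteq> cu I" using okN by (auto simp: node_ok_def)
  have finN: "finite (fst N)" using sub fin finite_subset by blast
  have lt: "card (fst N) < card (cu I)"
    using b sub fin by (intro psubset_card_mono) auto
  have c1: "card (fst N1) = Suc (card (fst N))" using f1 b finN by simp
  have c2: "card (fst N2) = Suc (card (fst N))" using f2 b finN by simp
  have m1: "mu I N1 < mu I N" "mu I N2 < mu I N" using c1 c2 lt by (auto simp: mu_def)
  obtain OP0 where OP0: "OPx = add_mset N OP0" using expand(2) by (metis multi_member_split)
  have "image_mset (mu I) OPx = add_mset (mu I N) (image_mset (mu I) OP0)" using OP0 by simp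
  moreover have "image_mset (mu I) OPx' = image_mset (mu I) OP0 + {#mu I N1, mu I N2#}"
    using expand(1) OP0 by simp
  ultimately show ?thesis unfolding mult1_def using m1
    by (intro CollectI case_prodI exI[of _ "mu I N"] exI[of _ "image_mset (mu I) OP0"]
         exI[of _ "{#mu I N1, mu I N2#}"]) auto
qed

lemma progress:
  assumes iv: "inv I (Search OPx)"
  shows "\<exists>S'. cbs_step I (Search OPx) S'"
proof -
  have ne: "OPx \<noteq> {#}" and ok: "\<forall>N\<in>#OPx. node_ok I N" using iv by (auto simp: inv_def)
  define m where "m = Min (node_cost I ` set_mset OPx)"
  have "m \<in> node_cost I ` set_mset OPx" unfolding m_def using ne by (intro Min_in) auto
  then obtain N where N: "N \<in># OPx" "node_cost I N = m" by auto
  have minN: "\<forall>N'\<in>#OPx. node_cost I N \<le> node_cost I N'" using N(2) unfolding m_def by auto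
  show ?thesis
  proof (cases "collision_free I (snd N)")
    case True
    then show ?thesis using cbs_step.ret[OF N(1) minN] by blast
  next
    case False
    then obtain coll where coll: "is_collision I (snd N) coll" by (auto simp: collision_free_def)
    obtain c1 c2 where bc: "branch_constrs coll = (c1, c2)" by (cases "branch_constrs coll") auto
    have ex: "\<exists>N'. child_node I N c N'" for c
    proof -
      have "\<exists>r. low_level_result I (constr_agent c) (insert c (fst N)) r"
      proof (cases "\<exists>l. is_path I (constr_agent c) l \<and> obeys (constr_agent c) l (insert c (fst N))")
        case True then obtain l where "is_path I (constr_agent c) l \<and> obeys (constr_agent c) l (insert c (fst N))" by blast
        then show ?thesis by (intro exI[of _ "Some l"]) (simp add: low_level_result_def)
      next
        case False then show ?thesis by (intro exI[of _ None]) (simp add: low_level_result_def)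
      qed
      then show ?thesis unfolding child_node_def by blast
    qed
    obtain N1 N2 where "child_node I N c1 N1" "child_node I N c2 N2" using ex by blast
    then show ?thesis using cbs_step.expand[OF N(1) minN coll bc] by blast
  qed
qed

lemma root_inv:
  assumes "root_node I R" shows "inv I (Search {#R#})"
proof -
  have ok: "node_ok I R" unfolding node_ok_def
  proof (intro conjI allI impI)
    show "fst R \<subseteq> cu I" using assms by (simp add: root_node_def)
  next
    fix i assume i: "i < nag I"
    then obtain l where "snd R i = Some l" "low_level_result I i {} (Some l)"
      using assms by (auto simp: root_node_def)
    then show "case snd R i of None \<Rightarrow> \<not> (\<exists>l. is_path I i l \<and> obeys i l (fst R))
        | Some l \<Rightarrow> is_path I i l \<and> obeys i l (fst R)"
      using assms by (simp add: root_node_def low_level_result_def)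
  next
    fix i assume "nag I \<le> i" then show "snd R i = None" using assms by (simp add: root_node_def)
  qed
  have "resp Q (fst R)" for Q using assms by (simp add: root_node_def resp_def obeys_def)
  then show ?thesis using ok by (simp add: inv_def)
qed

lemma no_step_return: "\<not> cbs_step I (Return P) S"
  by (auto elim: cbs_step.cases)

theorem theorem2:
  fixes I :: "'v mapf_inst" and R :: "'v ct_node"
  assumes "valid_inst I" and "root_node I R"
  shows "\<not> (\<exists>f. f 0 = Search {#R#} \<and> (\<forall>n. cbs_step I (f n) (f (Suc n)))) \<and>
         (\<forall>S. (cbs_step I)\<^sup>*\<^sup>* (Search {#R#}) S \<and> \<not> (\<exists>S'. cbs_step I S S') \<longrightarrow>
           (\<exists>P. S = Return P \<and> is_solution I P \<and>
                (\<forall>Q. is_solution I Q \<longrightarrow> plan_cost I P \<le> plan_cost I Q)))"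
proof (intro conjI allI impI notI)
  have fin: "finite (cu I)" using assms(1) finite_cu by (auto simp: valid_inst_def)
  assume "\<exists>f. f 0 = Search {#R#} \<and> (\<forall>n. cbs_step I (f n) (f (Suc n)))"
  then obtain f where f0: "f 0 = Search {#R#}" and fs: "\<forall>n. cbs_step I (f n) (f (Suc n))" by blast
  have iv: "inv I (f n)" for n
    by (induction n) (use f0 root_inv[OF assms(2)] fs step_inv in auto)
  have srch: "\<exists>OPx. f n = Search OPx" for n
      proof (cases "f n")
    case (Return P) then show ?thesis using fs no_step_return[of I P "f (Suc n)"] by metis
  qed auto
  define g where "g n = image_mset (mu I) (case f n of Search OPx \<Rightarrow> OPx | Return _ \<Rightarrow> {#})" for n
  have "(g (Suc n), g n) \<in> mult1 less_than" for n
  proof -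
    obtain OPx where OPx: "f n = Search OPx" using srch by blast
    obtain OPx' where OPx': "f (Suc n) = Search OPx'" using srch by blast
    have "(image_mset (mu I) OPx', image_mset (mu I) OPx) \<in> mult1 less_than"
      using step_dec[OF fin, of OPx OPx'] fs iv[of n] OPx OPx' by metis
    then show ?thesis unfolding g_def OPx OPx' by simp
  qed
  then show False using wf_mult1[OF wf_less_than] unfolding wf_iff_no_infinite_down_chain by blast
next
  fix S assume a: "(cbs_step I)\<^sup>*\<^sup>* (Search {#R#}) S \<and> \<not> (\<exists>S'. cbs_step I S S')"
  have "inv I S" using a
  proof -
    have "(cbs_step I)\<^sup>*\<^sup>* (Search {#R#}) S" using a by blast
    then show ?thesis
      by (induction rule: rtranclp_induct) (use root_inv[OF assms(2)] step_inv in auto)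
  qed
  then show "\<exists>P. S = Return P \<and> is_solution I P \<and> (\<forall>Q. is_solution I Q \<longrightarrow> plan_cost I P \<le> plan_cost I Q)"
    using a progress by (cases S) (auto simp: inv_def)
qed

end
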